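(* Let $p\geq 3$ be a prime, $u\in\{1,\ldots,p-1\}$ and $s\geq 2$ an integer. For an integer $n\geq p^{s+1}$ with base-$p$ expansion $n=\sum_{i=0}^{v}\varepsilon_i p^{i}$ ($\varepsilon_i\in\{0,\ldots,p-1\}$), let $t(n)>s$ be the least index $t>s$ with $\varepsilon_t\neq 0$. Then among those $n\geq p^{s+1}$ with $\nu_{p}\big(A_{p,(p-1)(up^s-1)}(n)\big)\in\{1,2\}$, the value $\nu_{p}\big(A_{p,(p-1)(up^s-1)}(n)\big)$ depends only on the digit $\varepsilon_s$ and the digit $\varepsilon_{t(n)}$; that is, if $n,n'\geq p^{s+1}$ both have valuation in $\{1,2\}$, the same digit in position $s$, and the same first nonzero digit in a position greater than $s$, then $\nu_{p}\big(A_{p,(p-1)(up^s-1)}(n)\big)=\nu_{p}\big(A_{p,(p-1)(up^s-1)}(n')\big)$.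
   Context: For an integer $m\geq 2$ and a positive integer $k$, the integers $A_{m,k}(n)$, $n\in\mathbb{N}=\{0,1,2,\ldots\}$, are defined by the formal power series identity $\prod_{i=0}^{\infty}\big(1-x^{m^{i}}\big)^{-k}=\sum_{n=0}^{\infty}A_{m,k}(n)x^{n}$. For a prime $p$, $\nu_p(n)$ denotes the $p$-adic valuation of the integer $n$, with $\nu_p(0)=+\infty$. *)

theory Defs
  imports "HOL-Computational_Algebra.Computational_Algebra"
begin

text \<open>The formal power series (1 - x^d)^(-1) = sum_j x^(d j) over the integers (d >= 1).\<close>
definition geom_fps :: "nat \<Rightarrow> int fps" where
  "geom_fps d = Abs_fps (\<lambda>j. if d dvd j then 1 else 0)"


text \<open>A_{m,k}(n): coefficient of x^n in prod_{i>=0} (1 - x^(m^i))^(-k).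
  Factors with m^i > n are congruent to 1 modulo x^(n+1), so the product over i <= n
  has the same n-th coefficient as the infinite product (m >= 2 gives m^n > n).\<close>
definition A :: "nat \<Rightarrow> nat \<Rightarrow> nat \<Rightarrow> int" where
  "A m k n = fps_nth (\<Prod>i\<le>n. geom_fps (m ^ i) ^ k) n"

definition digit :: "nat \<Rightarrow> nat \<Rightarrow> nat \<Rightarrow> nat" where
  "digit p n i = n div p ^ i mod p"

definition tidx :: "nat \<Rightarrow> nat \<Rightarrow> nat \<Rightarrow> nat" where
  "tidx p s n = (LEAST t. s < t \<and> digit p n t \<noteq> 0)"

end

theory Submission
  imports Defs
begin


definition fcong :: "int \<Rightarrow> nat \<Rightarrow> int fps \<Rightarrow> int fps \<Rightarrow> bool" where
  "fcong M n f g \<longleftrightarrow> (\<forall>i\<le>n. M dvd (f$i - g$i))"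

lemma fcong_refl: "fcong M n f f" by (simp add: fcong_def)
lemma fcong_sym: "fcong M n f g \<Longrightarrow> fcong M n g f"
  unfolding fcong_def by (metis dvd_minus_iff minus_diff_eq)
lemma fcong_trans: "fcong M n f g \<Longrightarrow> fcong M n g h \<Longrightarrow> fcong M n f h"
  unfolding fcong_def by (metis diff_add_cancel dvd_add add_diff_eq)
lemma fcong_add: "fcong M n f g \<Longrightarrow> fcong M n f' g' \<Longrightarrow> fcong M n (f+f') (g+g')"
  unfolding fcong_def by (simp add: diff_add_eq add_diff_eq, metis add_diff_add dvd_add)
lemma fcong_mult_right: assumes "fcong M n f g" shows "fcong M n (f*h) (g*h)"
  unfolding fcong_def
proof (intro allI impI)
  fix i assume i: "i \<le> n"
  have "(f*h)$i - (g*h)$i = (\<Sum>j=0..i. (f$j - g$j) * h$(i-j))"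
    by (simp add: fps_mult_nth sum_subtractf left_diff_distrib)
  also have "M dvd \<dots>" using assms i unfolding fcong_def by (intro dvd_sum) auto
  finally show "M dvd (f*h)$i - (g*h)$i" .
qed
lemma fcong_mult_left: "fcong M n f g \<Longrightarrow> fcong M n (h*f) (h*g)"
  using fcong_mult_right by (metis mult.commute)
lemma fcong_mult: "fcong M n f g \<Longrightarrow> fcong M n f' g' \<Longrightarrow> fcong M n (f*f') (g*g')"
  by (meson fcong_mult_left fcong_mult_right fcong_trans)
lemma fcong_power: "fcong M n f g \<Longrightarrow> fcong M n (f^k) (g^k)"
  by (induction k) (auto simp: fcong_refl fcong_mult)
lemma fcong_dvd: "fcong M n f g \<Longrightarrow> M' dvd M \<Longrightarrow> fcong M' n f g"
  unfolding fcong_def using dvd_trans by blast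

lemma neg_X_pow_nth: "((-(fps_X^D :: int fps))^k) $ i = (if i = D*k then (-1)^k else 0)"
proof (induction k arbitrary: i)
  case 0 then show ?case by simp
next
  case (Suc k)
  have "((-(fps_X^D :: int fps))^Suc k) $ i = - ((fps_X^D * (-(fps_X^D))^k) $ i)"
    by simp
  also have "\<dots> = (if i = D*Suc k then (-1)^Suc k else 0)"
    unfolding fps_X_power_mult_nth Suc by auto
  finally show ?case .
qed
lemma of_nat_mult_nth: "(of_nat n * f :: int fps) $ i = int n * f $ i" by (simp add: fps_of_nat)

lemma coeff_pow:
  assumes "D > 0"
  shows "((1 - fps_X^D)^K :: int fps) $ i = (if D dvd i then (-1)^(i div D) * of_nat (K choose (i div D)) else 0)"
proof -
  have "(1 - fps_X^D :: int fps)^K = (-(fps_X^D) + 1)^K" by simp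
  also have "\<dots> = (\<Sum>k\<le>K. of_nat (K choose k) * (-(fps_X^D))^k * 1^(K-k))" by (rule binomial_ring)
  finally have e: "(1 - fps_X^D :: int fps)^K = \<dots>" .
  have "((1 - fps_X^D)^K :: int fps) $ i = (\<Sum>k\<le>K. (if k = i div D \<and> D dvd i then of_nat (K choose k) * (-1)^k else 0))"
    unfolding e fps_sum_nth power_one mult_1_right of_nat_mult_nth neg_X_pow_nth using assms
    by (intro sum.cong refl) auto
  also have "\<dots> = (if D dvd i then (-1)^(i div D) * of_nat (K choose (i div D)) else 0)"
    by (cases "D dvd i") (auto simp: sum.delta' mult.commute)
  finally show ?thesis .
qed

lemma fps_mult_nth_sub:
  assumes "S \<subseteq> {..n}" "\<And>i. i \<le> n \<Longrightarrow> i \<notin> S \<Longrightarrow> f$i * g$(n-i) = 0"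
  shows "(f*g)$n = (\<Sum>i\<in>S. f$i * g$(n-i))"
  unfolding fps_mult_nth atLeast0AtMost
  by (intro sum.mono_neutral_right) (use assms in auto)

definition bb :: "nat \<Rightarrow> nat \<Rightarrow> int" where
  "bb p e = (-1)^e * int (p - 1 choose e)"

function cc :: "nat \<Rightarrow> nat \<Rightarrow> int" where
  "cc p m = (if m = 0 \<or> p < 2 then 1 else bb p (m mod p) * cc p (m div p))"
  by auto
termination by (relation "measure (\<lambda>(p,m). m)") auto

declare cc.simps[simp del]
lemma bb0[simp]: "bb p 0 = 1" by (simp add: bb_def)

lemma cc0[simp]: "cc p 0 = 1" by (subst cc.simps) simp

lemma cc_rec: "p \<ge> 2 \<Longrightarrow> cc p m = bb p (m mod p) * cc p (m div p)"
proof (cases "m = 0")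
  case True then show ?thesis by simp
next
  case False
  assume "p \<ge> 2" then show ?thesis using False by (subst cc.simps) simp
qed

lemma cc_digit: "p \<ge> 2 \<Longrightarrow> q < p \<Longrightarrow> cc p q = bb p q"
  using cc_rec[of p q] by simp

lemma cc_mult:
  assumes "p \<ge> 2" shows "r < p^L \<Longrightarrow> cc p (r + p^L*q) = cc p r * cc p q"
proof (induction L arbitrary: r)
  case 0 then show ?case by simp
next
  case (Suc L)
  have pp: "p > 0" using assms by simp
  have e: "r + p^Suc L*q = r + p*(p^L*q)" by simp
  have m: "(r + p^Suc L*q) mod p = r mod p" unfolding e by simp
  have d: "(r + p^Suc L*q) div p = r div p + p^L*q" unfolding e using pp by simp
  have "r div p < p^L" using Suc.prems pp by (simp add: div_less_iff_less_mult mult.commute)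
  then have "cc p (r + p^Suc L*q) = bb p (r mod p) * (cc p (r div p) * cc p q)"
    using cc_rec[OF assms, of "r + p^Suc L*q"] m d Suc.IH by simp
  also have "\<dots> = cc p r * cc p q" using cc_rec[OF assms, of r] by simp
  finally show ?case .
qed

definition PL :: "nat \<Rightarrow> nat \<Rightarrow> int fps" where
  "PL p L = (\<Prod>i<L. (1 - fps_X^(p^i))^(p-1))"

lemma PL_Suc: "PL p (Suc L) = PL p L * (1 - fps_X^(p^L))^(p-1)"
  by (simp add: PL_def)

lemma PL_nth:
  assumes "p \<ge> 2" shows "PL p L $ m = (if m < p^L then cc p m else 0)"
proof (induction L arbitrary: m)
  case 0 then show ?case by (simp add: PL_def)
next
  case (Suc L)
  define D where "D = p^L"
  have D: "D > 0" using assms by (simp add: D_def)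
  define q where "q = m div D"
  define r where "r = m mod D"
  have mr: "m = r + D*q" by (simp add: q_def r_def)
  have rD: "r < D" using D by (simp add: r_def)
  have IH: "\<And>i. PL p L $ i = (if i < D then cc p i else 0)" using Suc.IH by (simp add: D_def)
  have cp: "\<And>i. ((1 - fps_X^D)^(p-1) :: int fps) $ i = (if D dvd i then (-1)^(i div D) * of_nat ((p-1) choose (i div D)) else 0)"
    by (rule coeff_pow[OF D])
  have "PL p (Suc L) $ m = (PL p L * (1 - fps_X^D)^(p-1)) $ m" by (simp add: PL_Suc D_def)
  also have "\<dots> = (\<Sum>i\<in>{r}. PL p L $ i * ((1 - fps_X^D)^(p-1)) $ (m-i))"
  proof (rule fps_mult_nth_sub)
    show "{r} \<subseteq> {..m}" using mr by simp
    fix i assume i: "i \<le> m" "i \<notin> {r}"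
    show "PL p L $ i * (1 - fps_X ^ D) ^ (p - 1) $ (m - i) = 0"
    proof (cases "i < D \<and> D dvd (m - i)")
      case True
      then obtain k where k: "m - i = D*k" by blast
      then have "m = i + D*k" using i by simp
      then have "i = r" using True by (simp add: r_def)
      then show ?thesis using i by simp
    next
      case False
      show ?thesis
      proof (cases "i < D")
        case False
        then show ?thesis by (simp add: IH)
      next
        case True
        then have "\<not> D dvd (m-i)" using \<open>\<not> (i < D \<and> D dvd (m - i))\<close> by simp
        then show ?thesis unfolding cp by simp
      qed
    qed
  qed
  also have "\<dots> = PL p L $ r * ((1 - fps_X^D)^(p-1)) $ (D*q)"
    using mr by simp
  also have "\<dots> = cc p r * ((-1)^q * int (p - 1 choose q))"
    unfolding IH cp using rD D by simp
  also have "\<dots> = (if m < p^Suc L then cc p m else 0)"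
  proof (cases "m < p^Suc L")
    case True
    then have "q < p" using div_less_iff_less_mult[OF D, of m p] by (simp add: q_def D_def mult.commute)
    then have "cc p q = (-1)^q * int (p - 1 choose q)" using cc_digit[OF assms] by (simp add: bb_def)
    moreover have "cc p m = cc p r * cc p q" using cc_mult[OF assms, of r L q] mr rD by (simp add: D_def)
    ultimately show ?thesis using True by simp
  next
    case False
    then have "\<not> q < p" using div_less_iff_less_mult[OF D, of m p] by (simp add: q_def D_def mult.commute)
    then have "p - 1 < q" using assms by linarith
    then show ?thesis using False by simp
  qed
  finally show ?case .
qed




lemma choose_rec: "Suc k * (n choose Suc k) = (n - k) * (n choose k)"
  by (metis binomial_absorption binomial_absorb_comp)

definition pdiv :: "int \<Rightarrow> int fps \<Rightarrow> bool" where
  "pdiv M F \<longleftrightarrow> (\<forall>i. M dvd F$i)"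

lemma pdiv_mult: assumes "pdiv a F" "pdiv b G" shows "pdiv (a*b) (F*G)"
  unfolding pdiv_def fps_mult_nth
  using assms unfolding pdiv_def by (intro allI dvd_sum) (simp add: mult_dvd_mono)

lemma pdiv_1: "pdiv 1 F" by (simp add: pdiv_def)

lemma pdiv_power: "pdiv a F \<Longrightarrow> pdiv (a^k) (F^k)"
proof (induction k)
  case 0 then show ?case by (simp add: pdiv_def)
next
  case (Suc k) then show ?case using pdiv_mult[of a F "a^k" "F^k"] by simp
qed

lemma pdiv_of_nat: "pdiv (int c) (of_nat c)"
  by (simp add: pdiv_def fps_of_nat)

lemma pdiv_const: "pdiv c (fps_const c)"
  by (simp add: pdiv_def)

lemma pdiv_dvd: "pdiv a F \<Longrightarrow> b dvd a \<Longrightarrow> pdiv b F"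
  unfolding pdiv_def using dvd_trans by blast

lemma pdiv_sum: "(\<And>k. k \<in> S \<Longrightarrow> pdiv a (F k)) \<Longrightarrow> pdiv a (\<Sum>k\<in>S. F k)"
  unfolding pdiv_def fps_sum_nth by (auto intro: dvd_sum)

lemma fcong_eqI: "(\<And>i. i \<le> n \<Longrightarrow> f$i = g$i) \<Longrightarrow> fcong M n f g"
  by (simp add: fcong_def)

lemma fcong_pdivI: "f = g + R \<Longrightarrow> pdiv M R \<Longrightarrow> fcong M n f g"
  by (simp add: fcong_def pdiv_def)

lemma lift_p:
  fixes p :: nat
  assumes p: "prime p" and fg: "fcong (int p) n f g"
  shows "fcong (int p^2) n (f^p) (g^p)"
proof -
  define h where "h = Abs_fps (\<lambda>i. (f$i - g$i) div int p)"
  define f' where "f' = fps_const (int p) * h + g"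
  have "fcong (int p^2) n f f'"
  proof (rule fcong_eqI)
    fix i assume "i \<le> n"
    then have "int p dvd f$i - g$i" using fg by (simp add: fcong_def)
    then show "f$i = f'$i" by (simp add: f'_def h_def)
  qed
  then have 1: "fcong (int p^2) n (f^p) (f'^p)" by (rule fcong_power)
  have "f'^p = (\<Sum>k\<le>p. of_nat (p choose k) * (fps_const (int p) * h)^k * g^(p-k))"
    unfolding f'_def by (rule binomial_ring)
  also have "\<dots> = (\<Sum>k\<in>insert 0 {1..p}. of_nat (p choose k) * (fps_const (int p) * h)^k * g^(p-k))"
    by (intro sum.cong refl) auto
  also have "\<dots> = g^p + (\<Sum>k\<in>{1..p}. of_nat (p choose k) * (fps_const (int p) * h)^k * g^(p-k))"
    by (subst sum.insert) auto
  finally have e: "f'^p = g^p + (\<Sum>k\<in>{1..p}. of_nat (p choose k) * (fps_const (int p) * h)^k * g^(p-k))" .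
  have "pdiv (int p^2) (\<Sum>k\<in>{1..p}. of_nat (p choose k) * (fps_const (int p) * h)^k * g^(p-k))"
  proof (rule pdiv_sum)
    fix k assume k: "k \<in> {1..p}"
    have "pdiv (int (p choose k) * (int p * 1)^k * 1) (of_nat (p choose k) * (fps_const (int p) * h)^k * g^(p-k))"
      by (intro pdiv_mult pdiv_power pdiv_of_nat pdiv_const pdiv_1)
    moreover have "int p^2 dvd int (p choose k) * (int p * 1)^k * 1"
    proof (cases "k = p")
      case True
      have "p \<ge> 2" using p prime_ge_2_nat by blast
      then have "int p^2 dvd int p ^ p" by (simp add: le_imp_power_dvd)
      then show ?thesis using True by simp
    next
      case False
      then have "p dvd (p choose k)" using k p by (intro dvd_choose_prime) auto
      then have "int p dvd int (p choose k)" by simp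
      moreover have "int p dvd int p ^ k" using k by (simp add: dvd_power)
      ultimately have "int p * int p dvd int (p choose k) * int p ^ k" by (rule mult_dvd_mono)
      then show ?thesis by (simp add: power2_eq_square)
    qed
    ultimately show "pdiv (int p^2) (of_nat (p choose k) * (fps_const (int p) * h)^k * g^(p-k))"
      by (rule pdiv_dvd)
  qed
  then have "fcong (int p^2) n (f'^p) (g^p)" using e by (intro fcong_pdivI) 
  then show ?thesis using 1 fcong_trans by blast
qed


lemma frob1:
  fixes p :: nat
  assumes p: "prime p" "odd p" and D: "D > 0"
  shows "fcong (int p) n ((1 - fps_X^D)^p) (1 - fps_X^(D*p))"
proof -
  have Dp: "D*p > 0" using D p prime_gt_0_nat by simp
  have e: "\<And>i. (1 - fps_X^(D*p) :: int fps) $ i = (if D * p dvd i then (- 1) ^ (i div (D * p)) * int (1 choose (i div (D * p))) else 0)"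
    using coeff_pow[OF Dp, of 1] by (simp only: power_one_right)
  show ?thesis unfolding fcong_def
  proof (intro allI impI)
    fix i assume "i \<le> n"
    show "int p dvd ((1 - fps_X^D)^p) $ i - (1 - fps_X^(D*p)) $ i"
      unfolding e coeff_pow[OF D]
    proof (cases "D dvd i")
      case False
      then have "\<not> D*p dvd i" using dvd_mult_left by blast
      then show "int p dvd (if D dvd i then (- 1) ^ (i div D) * int (p choose (i div D)) else 0) -
           (if D * p dvd i then (- 1) ^ (i div (D * p)) * int (1 choose (i div (D * p))) else 0)"
        using False by simp
    next
      case True
      then obtain q where q: "i = D*q" by blast
      have idq: "i div D = q" using q D by simp
      show "int p dvd (if D dvd i then (- 1) ^ (i div D) * int (p choose (i div D)) else 0) -
           (if D * p dvd i then (- 1) ^ (i div (D * p)) * int (1 choose (i div (D * p))) else 0)"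
      proof (cases "q = 0 \<or> q = p")
        case True
        then show ?thesis
        proof
          assume "q = 0" then show ?thesis using q D by simp
        next
          assume "q = p"
          then have "i div (D*p) = 1" using q Dp by simp
          then show ?thesis using q \<open>q = p\<close> p(2) D by simp
        qed
      next
        case False
        have sec: "(if D * p dvd i then (- 1) ^ (i div (D * p)) * int (1 choose (i div (D * p))) else 0) = (0::int)"
        proof (cases "D*p dvd i")
          case True
          then obtain w where w: "i = D*p*w" by blast
          then have "q = p*w" using q D by simp
          then have "w \<noteq> 0" "w \<noteq> 1" using False by auto
          moreover have "i div (D*p) = w" using w Dp by simp
          ultimately show ?thesis by simp
        qed simp
        moreover have "int p dvd int (p choose q)"
        proof (cases "q < p")
          case True
          then have "p dvd (p choose q)" using False p by (intro dvd_choose_prime) auto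
          then show ?thesis by simp
        next
          case False then show ?thesis using \<open>\<not>(q = 0 \<or> q = p)\<close> by (simp add: binomial_eq_0)
        qed
        ultimately show ?thesis using True idq sec by simp
      qed
    qed
  qed
qed


lemma chain_aux:
  fixes p :: nat
  assumes p: "prime p" "odd p"
  shows "i + 1 \<le> s \<Longrightarrow> fcong (int p^2) n ((1 - fps_X)^(p^s)) ((1 - fps_X^(p^i))^(p^(s-i)))"
proof (induction i)
  case 0 then show ?case by (simp add: fcong_refl)
next
  case (Suc i)
  define t where "t = s - i - 2"
  have st1: "s - i = Suc (Suc t)" using Suc.prems by (simp add: t_def)
  have st2: "s - Suc i = Suc t" using Suc.prems by (simp add: t_def)
  have D: "p^i > 0" using p prime_gt_0_nat by simp
  define Y where "Y = (1 - fps_X^(p^i) :: int fps)"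
  have f1: "fcong (int p) n (Y^p) (1 - fps_X^(p^i*p))" unfolding Y_def by (rule frob1[OF p D])
  have f2: "fcong (int p^2) n ((Y^p)^p) ((1 - fps_X^(p^i*p))^p)" by (rule lift_p[OF p(1) f1])
  have f3: "fcong (int p^2) n (((Y^p)^p)^(p^t)) (((1 - fps_X^(p^i*p))^p)^(p^t))" by (rule fcong_power[OF f2])
  have x1: "p^(s-i) = p*(p*p^t)" unfolding st1 by simp
  have x2: "p^(s - Suc i) = p*p^t" unfolding st2 by simp
  have x3: "p^Suc i = p^i*p" by (rule power_Suc2)
  have e1: "((Y^p)^p)^(p^t) = Y^(p^(s-i))" unfolding x1 by (simp only: power_mult)
  have e2: "((1 - fps_X^(p^i*p))^p)^(p^t) = (1 - fps_X^(p^Suc i) :: int fps)^(p^(s - Suc i))"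
    unfolding x2 x3 by (simp only: power_mult)
  have "i + 1 \<le> s" using Suc.prems by simp
  then have "fcong (int p^2) n ((1 - fps_X)^(p^s)) (Y^(p^(s-i)))" using Suc.IH by (simp add: Y_def)
  then show ?case using f3 e1 e2 fcong_trans by metis
qed

lemma chain:
  fixes p :: nat
  assumes p: "prime p" "odd p" and s: "s \<ge> 1"
  shows "fcong (int p^2) n ((1 - fps_X)^(p^s)) ((1 - fps_X^(p^(s-1)))^p)"
  using chain_aux[OF p, of "s-1" s n] s by simp

lemma geom_inv:
  assumes d: "d > 0" shows "geom_fps d * (1 - fps_X^d) = 1"
proof (rule fps_ext)
  fix i
  have "(geom_fps d * (1 - fps_X^d)) $ i = geom_fps d $ i - (geom_fps d * fps_X^d) $ i"
    by (simp add: right_diff_distrib)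
  also have "\<dots> = (if d dvd i then 1 else 0) - (if i < d then 0 else (if d dvd (i-d) then 1 else 0))"
    unfolding fps_X_power_mult_right_nth by (simp add: geom_fps_def)
  also have "\<dots> = (1 :: int fps) $ i"
  proof (cases "i < d")
    case True
    then show ?thesis using d by (cases "i = 0") (auto dest: dvd_imp_le)
  next
    case False
    then have "d dvd (i - d) \<longleftrightarrow> d dvd i" by (simp add: dvd_minus_self)
    then show ?thesis using False d by auto
  qed
  finally show "(geom_fps d * (1 - fps_X^d)) $ i = (1 :: int fps) $ i" .
qed

lemma bb_cong:
  fixes p :: nat
  assumes p: "prime p"
  shows "e < p \<Longrightarrow> int p dvd bb p e - 1"
proof (induction e)
  case 0 then show ?case by simp
next
  case (Suc e)
  define C where "C = (p - 1 choose e)"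
  define C' where "C' = (p - 1 choose Suc e)"
  have r: "Suc e * C' = (p - 1 - e) * C" unfolding C_def C'_def by (rule choose_rec)
  have pe: "(p - 1 - e) + Suc e = p" using Suc.prems by simp
  have "Suc e * (C' + C) = (p - 1 - e) * C + Suc e * C" using r by (simp add: distrib_left)
  also have "\<dots> = p * C" using pe by (metis add_mult_distrib)
  finally have "Suc e * (C' + C) = p * C" .
  then have "p dvd Suc e * (C' + C)" by simp
  moreover have "\<not> p dvd Suc e" using Suc.prems by (auto dest: dvd_imp_le)
  ultimately have "p dvd C' + C" using p prime_dvd_mult_iff by blast
  then have d: "int p dvd int C' + int C" by (metis of_nat_add of_nat_dvd_iff)
  have eq: "bb p (Suc e) - 1 = (bb p e - 1) - (-1)^e * (int C' + int C)"
    by (simp add: bb_def C_def C'_def algebra_simps)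
  have ih: "int p dvd bb p e - 1" using Suc.IH Suc.prems by simp
  have "int p dvd (-1)^e * (int C' + int C)" using d by (rule dvd_mult)
  then have "int p dvd (bb p e - 1) - (-1)^e * (int C' + int C)" by (rule dvd_diff[OF ih])
  then show ?case unfolding eq .
qed

lemma cc_cong:
  fixes p :: nat
  assumes p: "prime p"
  shows "int p dvd cc p m - 1"
proof (induction m rule: less_induct)
  case (less m)
  have p2: "p \<ge> 2" using p prime_ge_2_nat by blast
  show ?case
  proof (cases "m = 0")
    case True then show ?thesis by simp
  next
    case False
    then have "m div p < m" using p2 by simp
    then have h1: "int p dvd cc p (m div p) - 1" by (rule less)
    have h2: "int p dvd bb p (m mod p) - 1" using bb_cong[OF p] p2 by simp
    have eq: "cc p m - 1 = (bb p (m mod p) - 1) * cc p (m div p) + (cc p (m div p) - 1)"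
      using cc_rec[OF p2, of m] by (simp add: algebra_simps)
    have "int p dvd (bb p (m mod p) - 1) * cc p (m div p) + (cc p (m div p) - 1)"
      using h1 h2 by (intro dvd_add dvd_mult2)
    then show ?thesis unfolding eq .
  qed
qed

lemma cc_coprime:
  fixes p :: nat
  assumes p: "prime p"
  shows "\<not> int p dvd cc p m"
proof
  assume "int p dvd cc p m"
  then have "int p dvd cc p m - (cc p m - 1)" using cc_cong[OF p, of m] by (rule dvd_diff)
  then have "int p dvd 1" by simp
  then show False using p by (simp add: prime_gt_1_nat)
qed




lemma fcongI: "(\<And>i. i \<le> n \<Longrightarrow> M dvd f$i - g$i) \<Longrightarrow> fcong M n f g"
  by (simp add: fcong_def)

lemma main_cong:
  fixes p u s n :: nat
  assumes p: "prime p" "odd p" and u: "u \<ge> 1" and s: "s \<ge> 1"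
  shows "int p^2 dvd A p ((p - 1) * (u * p ^ s - 1)) n - (PL p (Suc n) * (1 - fps_X^(p^(s-1)))^(u*p)) $ n"
proof -
  have p2: "p \<ge> 2" using p prime_ge_2_nat by blast
  define G where "G = (\<Prod>i\<le>n. geom_fps (p^i))"
  define Pi where "Pi = (\<Prod>i\<le>n. (1 - fps_X^(p^i) :: int fps))"
  define Pn where "Pn = PL p (Suc n)"
  define m where "m = u * p^s - 1"
  define k where "k = (p - 1) * m"
  have um: "u * p^s = m + 1" using u p2 by (simp add: m_def)
  have GPi: "G * Pi = 1"
    unfolding G_def Pi_def prod.distrib[symmetric] using p2 by (intro prod.neutral ballI geom_inv) simp
  have Pn: "Pn = Pi^(p-1)"
    unfolding Pn_def PL_def Pi_def lessThan_Suc_atMost prod_power_distrib ..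
  have A: "A p k n = (G^k) $ n"
    unfolding A_def G_def prod_power_distrib ..
  define Z where "Z = Pn * (1 - fps_X)"
  have Z1: "fcong (int p) n Z 1"
  proof (rule fcongI)
    fix i assume i: "i \<le> n"
    have lt: "\<And>j. j \<le> n \<Longrightarrow> j < p^Suc n"
    proof -
      fix j assume j: "j \<le> n"
      have "n < 2^n" by (rule less_exp)
      also have "(2::nat)^n \<le> p^n" using p2 by (rule power_mono) simp
      also have "p^n \<le> p^Suc n" using p2 by simp
      finally show "j < p^Suc n" using j by simp
    qed
    have "Z $ i = Pn $ i - (Pn * fps_X^1) $ i" by (simp add: Z_def right_diff_distrib)
    also have "\<dots> = cc p i - (if i < 1 then 0 else cc p (i - 1))"
      unfolding fps_X_power_mult_right_nth Pn_def PL_nth[OF p2] using lt i by auto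
    finally have z: "Z $ i = cc p i - (if i < 1 then 0 else cc p (i - 1))" .
    show "int p dvd Z $ i - (1::int fps) $ i"
    proof (cases "i = 0")
      case True then show ?thesis using z by simp
    next
      case False
      have "int p dvd (cc p i - 1) - (cc p (i-1) - 1)" using cc_cong[OF p(1), of i] cc_cong[OF p(1), of "i-1"] by (rule dvd_diff)
      then show ?thesis using z False by simp
    qed
  qed
  have "fcong (int p^2) n (Z^p) (1^p)" by (rule lift_p[OF p(1) Z1])
  then have "fcong (int p^2) n ((Z^p)^(u*p^(s-1))) ((1^p)^(u*p^(s-1)))" by (rule fcong_power)
  moreover have "(Z^p)^(u*p^(s-1)) = Z^(u*p^s)"
  proof -
    have "p * (u * p^(s-1)) = u * p^s" using s by (cases s) auto
    then show ?thesis by (metis power_mult)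
  qed
  ultimately have Zc: "fcong (int p^2) n (Z^(u*p^s)) 1" by simp
  have "fcong (int p^2) n (G^k * 1) (G^k * Z^(u*p^s))" by (rule fcong_mult_left[OF fcong_sym[OF Zc]])
  moreover have "G^k * Z^(u*p^s) = Pn * (1 - fps_X)^(u*p^s)"
  proof -
    have "G^k * Z^(u*p^s) = G^((p-1)*m) * (Pi^(p-1))^(m+1) * (1 - fps_X)^(m+1)"
      unfolding Z_def um k_def Pn by (simp only: power_mult_distrib mult.assoc)
    also have "G^((p-1)*m) * (Pi^(p-1))^(m+1) = ((G*Pi)^(p-1))^m * Pi^(p-1)"
    proof -
      have a: "G^((p-1)*m) = (G^(p-1))^m" by (rule power_mult)
      have b: "(Pi^(p-1))^(m+1) = (Pi^(p-1))^m * Pi^(p-1)" by (simp only: power_add power_one_right)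
      have c: "((G*Pi)^(p-1))^m = (G^(p-1))^m * (Pi^(p-1))^m" by (simp only: power_mult_distrib)
      show ?thesis by (simp only: a b c mult.assoc)
    qed
    finally show ?thesis unfolding GPi Pn um by simp
  qed
  ultimately have c1: "fcong (int p^2) n (G^k) (Pn * (1 - fps_X)^(u*p^s))" by simp
  have "fcong (int p^2) n ((1 - fps_X)^(u*p^s)) ((1 - fps_X^(p^(s-1)))^(u*p))"
    using fcong_power[OF chain[OF p s], of n u] by (metis power_mult mult.commute)
  then have "fcong (int p^2) n (Pn * (1 - fps_X)^(u*p^s)) (Pn * (1 - fps_X^(p^(s-1)))^(u*p))"
    by (rule fcong_mult_left)
  with c1 have "fcong (int p^2) n (G^k) (Pn * (1 - fps_X^(p^(s-1)))^(u*p))" by (rule fcong_trans)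
  then have "int p^2 dvd (G^k)$n - (Pn * (1 - fps_X^(p^(s-1)))^(u*p))$n" unfolding fcong_def by simp
  then show ?thesis using A by (simp add: k_def m_def Pn_def)
qed



lemma coeff_sparse:
  assumes D: "D > 0" and n: "D*K \<le> n"
  shows "((1 - fps_X^D)^K * F) $ n = (\<Sum>m\<le>K. (-1)^m * int (K choose m) * F$(n - D*m))"
proof -
  have "((1 - fps_X^D)^K * F) $ n = (\<Sum>i\<in>(\<lambda>m. D*m) ` {..K}. ((1 - fps_X^D)^K) $ i * F$(n-i))"
  proof (rule fps_mult_nth_sub)
    show "(\<lambda>m. D*m) ` {..K} \<subseteq> {..n}" using n by (auto intro: order.trans[OF mult_le_mono2])
    fix i assume i: "i \<le> n" "i \<notin> (\<lambda>m. D*m) ` {..K}"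
    show "((1 - fps_X^D)^K) $ i * F$(n-i) = 0"
    proof (cases "D dvd i")
      case True
      then obtain q where q: "i = D*q" by blast
      then have "q > K" using i by auto
      then show ?thesis unfolding coeff_pow[OF D] using q D by simp
    next
      case False then show ?thesis unfolding coeff_pow[OF D] by simp
    qed
  qed
  also have "\<dots> = (\<Sum>m\<le>K. ((1 - fps_X^D)^K) $ (D*m) * F$(n-D*m))"
    by (subst sum.reindex) (use D in \<open>auto simp: inj_on_def\<close>)
  also have "\<dots> = (\<Sum>m\<le>K. (-1)^m * int (K choose m) * F$(n - D*m))"
    unfolding coeff_pow[OF D] using D by simp
  finally show ?thesis .
qed

lemma coeff_sparse1:
  assumes n: "K \<le> n"
  shows "((1 - fps_X)^K * F) $ n = (\<Sum>m\<le>K. (-1)^m * int (K choose m) * F$(n - m))"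
  using coeff_sparse[of 1 K n F] n by simp

definition Pc :: "nat \<Rightarrow> int fps" where "Pc p = Abs_fps (cc p)"
definition Pt :: "nat \<Rightarrow> int fps" where "Pt p = Abs_fps (\<lambda>i. if p dvd i then cc p (i div p) else 0)"

lemma lt_pow: 
  fixes p j n :: nat
  assumes p2: "p \<ge> 2" and j: "j \<le> n" shows "j < p^Suc n"
proof -
  have "n < 2^n" by (rule less_exp)
  also have "(2::nat)^n \<le> p^n" using p2 by (rule power_mono) simp
  also have "p^n \<le> p^Suc n" using p2 by simp
  finally show "j < p^Suc n" using j by simp
qed

lemma extract1:
  fixes p L n K :: nat
  assumes p2: "p \<ge> 2" and n: "p^L * K \<le> n"
  shows "(PL p (Suc n) * (1 - fps_X^(p^L))^K) $ n = cc p (n mod p^L) * ((1 - fps_X)^K * Pc p) $ (n div p^L)"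
proof -
  define d where "d = p^L"
  have d: "d > 0" using p2 by (simp add: d_def)
  have n': "d * K \<le> n" using n by (simp add: d_def)
  have Kn: "K \<le> n div d" using n' d by (simp add: less_eq_div_iff_mult_less_eq mult.commute)
  have "(PL p (Suc n) * (1 - fps_X^d)^K) $ n = ((1 - fps_X^d)^K * PL p (Suc n)) $ n" by (simp add: mult.commute)
  also have "\<dots> = (\<Sum>m\<le>K. (-1)^m * int (K choose m) * PL p (Suc n) $ (n - d*m))"
    by (rule coeff_sparse[OF d n'])
  also have "\<dots> = (\<Sum>m\<le>K. (-1)^m * int (K choose m) * (cc p (n mod d) * cc p (n div d - m)))"
  proof (intro sum.cong refl)
    fix m assume m: "m \<in> {..K}"
    then have mle: "m \<le> n div d" using Kn by simp
    have e: "n - d*m = n mod d + d * (n div d - m)"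
    proof -
      have h1: "n = n mod d + d * (n div d)" by simp
      have h2: "d * (n div d) = d * (n div d - m) + d*m" using mle by (simp add: algebra_simps)
      show ?thesis using h1 h2 by linarith
    qed
    have "PL p (Suc n) $ (n - d*m) = cc p (n - d*m)"
      unfolding PL_nth[OF p2] using lt_pow[OF p2, of "n - d*m" n] by simp
    also have "\<dots> = cc p (n mod d) * cc p (n div d - m)"
    proof -
      have "cc p (n mod d + d*(n div d - m)) = cc p (n mod d) * cc p (n div d - m)"
        unfolding d_def by (rule cc_mult[OF p2]) (use p2 in simp)
      then show ?thesis using e by simp
    qed
    finally show "(-1)^m * int (K choose m) * PL p (Suc n) $ (n - d*m) = (-1)^m * int (K choose m) * (cc p (n mod d) * cc p (n div d - m))"
      by simp
  qed
  also have "\<dots> = cc p (n mod d) * (\<Sum>m\<le>K. (-1)^m * int (K choose m) * Pc p $ (n div d - m))"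
    by (simp add: sum_distrib_left Pc_def mult_ac)
  also have "\<dots> = cc p (n mod d) * ((1 - fps_X)^K * Pc p) $ (n div d)"
    using coeff_sparse1[OF Kn] by simp
  finally show ?thesis by (simp add: d_def)
qed

lemma Pc_Pt:
  assumes p2: "p \<ge> 2" shows "Pc p = (1 - fps_X)^(p-1) * Pt p"
proof (rule fps_ext)
  fix m
  have D: "(1::nat) > 0" by simp
  have "((1 - fps_X)^(p-1) * Pt p) $ m = (\<Sum>i\<in>{m mod p}. ((1 - fps_X)^(p-1)) $ i * Pt p $ (m - i))"
  proof (rule fps_mult_nth_sub)
    show "{m mod p} \<subseteq> {..m}" by simp
    fix i assume i: "i \<le> m" "i \<notin> {m mod p}"
    show "((1 - fps_X)^(p-1)) $ i * Pt p $ (m - i) = 0"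
    proof (cases "i < p \<and> p dvd (m - i)")
      case True
      then obtain k where k: "m - i = p*k" by blast
      then have "m = i + p*k" using i by simp
      then have "i = m mod p" using True by simp
      then show ?thesis using i by simp
    next
      case False
      show ?thesis
      proof (cases "i < p")
        case True
        then have "\<not> p dvd (m - i)" using False by simp
        then show ?thesis by (simp add: Pt_def)
      next
        case False
        then have "p - 1 < i" using p2 by simp
        then show ?thesis using coeff_pow[OF D, of "p-1" i] by simp
      qed
    qed
  qed
  also have "\<dots> = (-1)^(m mod p) * int ((p-1) choose (m mod p)) * cc p (m div p)"
  proof -
    have "p dvd (m - m mod p)" by (simp add: minus_mod_eq_mult_div)
    moreover have "(m - m mod p) div p = m div p" using p2 by (simp add: minus_mod_eq_mult_div)
    ultimately show ?thesis using coeff_pow[OF D, of "p-1" "m mod p"] by (simp add: Pt_def)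
  qed
  also have "\<dots> = Pc p $ m" using cc_rec[OF p2, of m] by (simp add: Pc_def bb_def)
  finally show "Pc p $ m = ((1 - fps_X)^(p-1) * Pt p) $ m" by simp
qed




lemma cancel_p:
  fixes p :: nat assumes p: "prime p" and c: "\<not> int p dvd c"
  shows "int p dvd c * x \<longleftrightarrow> int p dvd x"
proof -
  have "coprime (int p) c" using p c by (intro prime_imp_coprime) simp_all
  then show ?thesis by (rule coprime_dvd_mult_right_iff)
qed

lemma cancel_p2:
  fixes p :: nat assumes p: "prime p" and c: "\<not> int p dvd c"
  shows "int p^2 dvd c * x \<longleftrightarrow> int p^2 dvd x"
proof -
  have "coprime (int p) c" using p c by (intro prime_imp_coprime) simp_all
  then have "coprime (int p^2) c" by simp
  then show ?thesis by (rule coprime_dvd_mult_right_iff)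
qed

definition EE :: "nat \<Rightarrow> nat \<Rightarrow> int" where
  "EE K i = (-1)^i * int (K choose i)"

definition Ssum :: "nat \<Rightarrow> nat \<Rightarrow> nat \<Rightarrow> nat \<Rightarrow> int" where
  "Ssum p u N1 r = (\<Sum>j\<le>u. EE (u*p+p-1) (r+p*j) * cc p (N1 - j))"

lemma extract2:
  fixes p u N1 r :: nat
  assumes p2: "p \<ge> 2" and r: "r < p" and uN: "u \<le> N1"
  shows "((1 - fps_X)^(u*p+p-1) * Pt p) $ (r + p*N1) = Ssum p u N1 r"
proof -
  define K where "K = u*p+p-1"
  define N where "N = r + p*N1"
  have D: "(1::nat) > 0" by simp
  have cK: "\<And>i. ((1 - fps_X)^K :: int fps) $ i = EE K i"
    using coeff_pow[OF D] by (simp add: EE_def)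
  have "((1 - fps_X)^K * Pt p) $ N = (\<Sum>i\<in>(\<lambda>j. r + p*j) ` {..u}. ((1 - fps_X)^K) $ i * Pt p $ (N - i))"
  proof (rule fps_mult_nth_sub)
    show "(\<lambda>j. r + p*j) ` {..u} \<subseteq> {..N}" using uN by (auto simp: N_def)
    fix i assume i: "i \<le> N" "i \<notin> (\<lambda>j. r + p*j) ` {..u}"
    show "((1 - fps_X)^K) $ i * Pt p $ (N - i) = 0"
    proof (cases "i \<le> K \<and> p dvd (N - i)")
      case False
      show ?thesis
      proof (cases "i \<le> K")
        case False then show ?thesis unfolding cK EE_def by simp
      next
        case True
        then have "\<not> p dvd (N - i)" using \<open>\<not> (i \<le> K \<and> p dvd (N - i))\<close> by simp
        then show ?thesis by (simp add: Pt_def)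
      qed
    next
      case True
      then obtain t where t: "N - i = p*t" by blast
      have "p*t \<le> r + p*N1" using t i by (simp add: N_def)
      also have "\<dots> < p*(N1+1)" using r by simp
      finally have "p*t < p*(N1+1)" .
      then have "t < N1 + 1" by (metis mult_less_cancel1)
      then have "t \<le> N1" by simp
      have ieq: "i = r + p*(N1 - t)" using t i \<open>t \<le> N1\<close> by (simp add: N_def diff_mult_distrib2)
      have "r + p*(N1-t) \<le> u*p+p-1" using True ieq by (simp add: K_def)
      then have "p*(N1-t) < p*(u+1)" using r by (simp add: algebra_simps)
      then have "N1 - t < u + 1" by (metis mult_less_cancel1)
      then have "N1 - t \<le> u" by simp
      then have "i \<in> (\<lambda>j. r + p*j) ` {..u}" using ieq by auto
      then show ?thesis using i by simp
    qed
  qed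
  also have "\<dots> = (\<Sum>j\<le>u. ((1 - fps_X)^K) $ (r + p*j) * Pt p $ (N - (r + p*j)))"
    by (subst sum.reindex) (use p2 in \<open>auto simp: inj_on_def\<close>)
  also have "\<dots> = Ssum p u N1 r"
    unfolding Ssum_def K_def[symmetric]
  proof (intro sum.cong refl)
    fix j assume j: "j \<in> {..u}"
    have "N - (r + p*j) = p*(N1 - j)" by (simp add: N_def diff_mult_distrib2)
    then have "Pt p $ (N - (r + p*j)) = cc p (N1 - j)" using p2 by (simp add: Pt_def)
    then show "((1 - fps_X)^K) $ (r + p*j) * Pt p $ (N - (r + p*j)) = EE K (r+p*j) * cc p (N1 - j)"
      unfolding cK by simp
  qed
  finally show ?thesis by (simp add: K_def N_def)
qed

lemma Bc_eq:
  assumes p2: "p \<ge> 2" shows "(1 - fps_X)^(u*p) * Pc p = (1 - fps_X)^(u*p+p-1) * Pt p"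
proof -
  have "u*p+p-1 = u*p + (p-1)" using p2 by simp
  then show ?thesis unfolding Pc_Pt[OF p2] by (simp add: power_add mult.assoc)
qed

lemma EE_rec:
  assumes i: "i \<ge> 1" shows "int i * EE K i = (int i - int (K+1)) * EE K (i-1)"
proof -
  obtain k where k: "i = Suc k" using i by (cases i) auto
  have r: "Suc k * (K choose Suc k) = (K - k) * (K choose k)" by (rule choose_rec)
  show ?thesis
  proof (cases "k \<le> K")
    case True
    then have h: "int (Suc k) * int (K choose Suc k) = (int K - int k) * int (K choose k)"
      using r by (metis of_nat_diff of_nat_mult)
    have "int (Suc k) * ((-1)^(Suc k) * int (K choose Suc k)) = - ((-1)^k * (int (Suc k) * int (K choose Suc k)))"
      by simp
    also have "\<dots> = - ((-1)^k * ((int K - int k) * int (K choose k)))" unfolding h ..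
    also have "\<dots> = (int (Suc k) - int (K+1)) * ((-1)^k * int (K choose k))"
      by (simp add: algebra_simps)
    finally show ?thesis unfolding k EE_def by simp
  next
    case False
    then have c1: "(K choose k) = 0" and c2: "(K choose Suc k) = 0" by (simp_all add: binomial_eq_0)
    show ?thesis unfolding k EE_def c2 by (simp add: c1)
  qed
qed


lemma S_step:
  fixes p u N1 r :: nat
  assumes p: "prime p" and r1: "1 \<le> r" and rp: "r < p"
  shows "int p dvd Ssum p u N1 r - Ssum p u N1 (r-1)"
    and "int p dvd Ssum p u N1 (r-1) \<Longrightarrow> int p^2 dvd Ssum p u N1 r - Ssum p u N1 (r-1)"
proof -
  define K where "K = u*p+p-1"
  have p2: "p \<ge> 2" using p prime_ge_2_nat by blast
  have K1: "int (K+1) = int p * (int u + 1)" using p2 by (simp add: K_def algebra_simps of_nat_diff)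
  define E where "E = EE K"
  define g where "g = (\<lambda>j. cc p (N1 - j))"
  have nr: "\<not> int p dvd int r" using r1 rp by (auto dest: dvd_imp_le)
  have S: "\<And>r. Ssum p u N1 r = (\<Sum>j\<le>u. E (r+p*j) * g j)" by (simp add: Ssum_def E_def g_def K_def)
  have tm: "int r * E (r+p*j) = (int r - int (K+1)) * E ((r-1)+p*j) + int p * (int j * (E ((r-1)+p*j) - E (r+p*j)))"
    and dv: "int p dvd E ((r-1)+p*j) - E (r+p*j)" for j
  proof -
    have i1: "r + p*j \<ge> 1" using r1 by simp
    have im: "r + p*j - 1 = (r-1)+p*j" using r1 by simp
    have rec: "int (r+p*j) * E (r+p*j) = (int (r+p*j) - int (K+1)) * E ((r-1)+p*j)"
      using EE_rec[OF i1, of K] unfolding E_def im .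
    show "int r * E (r+p*j) = (int r - int (K+1)) * E ((r-1)+p*j) + int p * (int j * (E ((r-1)+p*j) - E (r+p*j)))"
      using rec by (simp add: algebra_simps)
    have "int r * (E (r+p*j) - E ((r-1)+p*j)) = int p * (int j * E ((r-1)+p*j) - (int u + 1) * E ((r-1)+p*j) - int j * E (r+p*j))"
      using rec unfolding K1 by (simp add: algebra_simps)
    then have "int p dvd int r * (E (r+p*j) - E ((r-1)+p*j))" by simp
    then have "int p dvd E (r+p*j) - E ((r-1)+p*j)" using cancel_p[OF p nr] by simp
    then show "int p dvd E ((r-1)+p*j) - E (r+p*j)" by (metis dvd_minus_iff minus_diff_eq)
  qed
  define W where "W = (\<Sum>j\<le>u. int j * (E ((r-1)+p*j) - E (r+p*j)) * g j)"
  have pW: "int p dvd W" unfolding W_def using dv by (intro dvd_sum) simp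
  have "int r * Ssum p u N1 r = (\<Sum>j\<le>u. int r * E (r+p*j) * g j)"
    unfolding S by (simp add: sum_distrib_left mult.assoc)
  also have "\<dots> = (\<Sum>j\<le>u. (int r - int (K+1)) * (E ((r-1)+p*j) * g j) + int p * (int j * (E ((r-1)+p*j) - E (r+p*j)) * g j))"
    unfolding tm by (simp add: algebra_simps)
  also have "\<dots> = (int r - int (K+1)) * Ssum p u N1 (r-1) + int p * W"
    unfolding S W_def by (simp add: sum.distrib sum_distrib_left)
  finally have key0: "int r * Ssum p u N1 r = (int r - int (K+1)) * Ssum p u N1 (r-1) + int p * W" .
  have key: "int r * (Ssum p u N1 r - Ssum p u N1 (r-1)) = int p * (W - (int u + 1) * Ssum p u N1 (r-1))"
    using key0 unfolding K1 by (simp add: algebra_simps)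
  then have "int p dvd int r * (Ssum p u N1 r - Ssum p u N1 (r-1))" by simp
  then show "int p dvd Ssum p u N1 r - Ssum p u N1 (r-1)" using cancel_p[OF p nr] by simp
  assume h: "int p dvd Ssum p u N1 (r-1)"
  have "int p dvd W - (int u + 1) * Ssum p u N1 (r-1)" using pW h by (intro dvd_diff dvd_mult) 
  then have "int p * int p dvd int p * (W - (int u + 1) * Ssum p u N1 (r-1))" by simp
  then have "int p^2 dvd int r * (Ssum p u N1 r - Ssum p u N1 (r-1))" unfolding key by (simp add: power2_eq_square)
  then show "int p^2 dvd Ssum p u N1 r - Ssum p u N1 (r-1)" using cancel_p2[OF p nr] by simp
qed

lemma S_all:
  fixes p u N1 :: nat
  assumes p: "prime p"
  shows "r < p \<Longrightarrow> (int p dvd Ssum p u N1 r \<longleftrightarrow> int p dvd Ssum p u N1 0) \<and>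
           (int p dvd Ssum p u N1 0 \<longrightarrow> int p^2 dvd Ssum p u N1 r - Ssum p u N1 0)"
proof (induction r)
  case 0 then show ?case by simp
next
  case (Suc r)
  have s1: "int p dvd Ssum p u N1 (Suc r) - Ssum p u N1 r" using S_step(1)[OF p, of "Suc r" u N1] Suc.prems by simp
  have IH: "(int p dvd Ssum p u N1 r \<longleftrightarrow> int p dvd Ssum p u N1 0) \<and>
           (int p dvd Ssum p u N1 0 \<longrightarrow> int p^2 dvd Ssum p u N1 r - Ssum p u N1 0)" using Suc by simp
  have A: "int p dvd Ssum p u N1 (Suc r) \<longleftrightarrow> int p dvd Ssum p u N1 r"
  proof -
    have e: "Ssum p u N1 (Suc r) = (Ssum p u N1 (Suc r) - Ssum p u N1 r) + Ssum p u N1 r" by simp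
    show ?thesis by (subst e) (rule dvd_add_right_iff[OF s1])
  qed
  moreover have "int p dvd Ssum p u N1 0 \<longrightarrow> int p^2 dvd Ssum p u N1 (Suc r) - Ssum p u N1 0"
  proof
    assume h0: "int p dvd Ssum p u N1 0"
    then have "int p dvd Ssum p u N1 r" using IH by simp
    then have "int p^2 dvd Ssum p u N1 (Suc r) - Ssum p u N1 r" using S_step(2)[OF p, of "Suc r" u N1] Suc.prems by simp
    moreover have "int p^2 dvd Ssum p u N1 r - Ssum p u N1 0" using IH h0 by simp
    ultimately have "int p^2 dvd (Ssum p u N1 (Suc r) - Ssum p u N1 r) + (Ssum p u N1 r - Ssum p u N1 0)"
      by (rule dvd_add)
    then show "int p^2 dvd Ssum p u N1 (Suc r) - Ssum p u N1 0" by simp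
  qed
  ultimately show ?case using IH by simp
qed




function fnz :: "nat \<Rightarrow> nat \<Rightarrow> nat" where
  "fnz p M = (if M = 0 \<or> p < 2 then 0 else if M mod p \<noteq> 0 then M mod p else fnz p (M div p))"
  by auto
termination by (relation "measure (\<lambda>(p,m). m)") auto

declare fnz.simps[simp del]

lemma fnz_rec: "p \<ge> 2 \<Longrightarrow> M > 0 \<Longrightarrow> fnz p M = (if M mod p \<noteq> 0 then M mod p else fnz p (M div p))"
  by (subst fnz.simps) simp

lemma fnz_range:
  assumes p2: "p \<ge> 2" shows "M \<ge> 1 \<Longrightarrow> 1 \<le> fnz p M \<and> fnz p M < p"
proof (induction M rule: less_induct)
  case (less M)
  show ?case
  proof (cases "M mod p = 0")
    case False
    then show ?thesis using fnz_rec[OF p2, of M] less.prems p2 by simp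
  next
    case True
    then have "p dvd M" by auto
    then have "M div p \<ge> 1" using less.prems p2 by (auto elim!: dvdE)
    moreover have "M div p < M" using less.prems p2 by simp
    ultimately show ?thesis using less.IH[of "M div p"] fnz_rec[OF p2, of M] True less.prems by simp
  qed
qed

lemma bb_pred:
  assumes e1: "1 \<le> e" and ep: "e < p"
  shows "int (p - e) * bb p (e - 1) = - int e * bb p e"
proof -
  have r: "Suc (e-1) * (p - 1 choose Suc (e-1)) = (p - 1 - (e-1)) * (p - 1 choose (e-1))" by (rule choose_rec)
  have "Suc (e-1) = e" "p - 1 - (e-1) = p - e" using e1 ep by auto
  then have r': "e * (p - 1 choose e) = (p - e) * (p - 1 choose (e-1))" using r by simp
  have s: "(-1::int)^e = - ((-1)^(e-1))" using e1 by (cases e) auto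
  have "int (p - e) * bb p (e - 1) = (-1)^(e-1) * int ((p - e) * (p - 1 choose (e-1)))"
    by (simp add: bb_def)
  also have "\<dots> = (-1)^(e-1) * int (e * (p - 1 choose e))" unfolding r' ..
  also have "\<dots> = - int e * bb p e" unfolding bb_def s by simp
  finally show ?thesis .
qed

lemma cc_pred:
  fixes p :: nat
  assumes p: "prime p" "odd p"
  shows "M \<ge> 1 \<Longrightarrow> int (p - fnz p M) * cc p (M - 1) = - int (fnz p M) * cc p M"
proof (induction M rule: less_induct)
  case (less M)
  have p2: "p \<ge> 2" using p prime_ge_2_nat by blast
  define q where "q = M div p"
  define e where "e = M mod p"
  have Me: "M = e + p^1 * q" by (simp add: e_def q_def)
  have ep: "e < p" using p2 by (simp add: e_def)
  show ?case
  proof (cases "e = 0")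
    case False
    have f: "fnz p M = e" using fnz_rec[OF p2, of M] less.prems False by (simp add: e_def)
    have M1: "M - 1 = (e - 1) + p^1 * q" using Me False by simp
    have c1: "cc p (M - 1) = bb p (e - 1) * cc p q"
      unfolding M1 by (subst cc_mult[OF p2]) (use ep in \<open>simp_all add: cc_digit[OF p2]\<close>)
    have c2: "cc p M = bb p e * cc p q"
      unfolding Me by (subst cc_mult[OF p2]) (use ep in \<open>simp_all add: cc_digit[OF p2]\<close>)
    have "int (p - e) * bb p (e - 1) = - int e * bb p e" using False ep by (intro bb_pred) simp_all
    then show ?thesis unfolding f c1 c2 by (simp add: mult.assoc[symmetric])
  next
    case True
    then have Mq: "M = p * q" using Me by simp
    then have q1: "q \<ge> 1" using less.prems by (cases q) auto
    have qM: "q < M" using Mq q1 p2 by simp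
    have f: "fnz p M = fnz p q" using fnz_rec[OF p2, of M] less.prems True by (simp add: e_def q_def)
    have M1: "M - 1 = (p - 1) + p^1 * (q - 1)" using Mq q1 p2 by (simp add: algebra_simps)
    have bp: "bb p (p - 1) = 1" using p(2) by (simp add: bb_def)
    have c1: "cc p (M - 1) = cc p (q - 1)"
      unfolding M1 by (subst cc_mult[OF p2]) (use p2 bp in \<open>simp_all add: cc_digit[OF p2]\<close>)
    have c2: "cc p M = cc p q"
      unfolding Mq using cc_mult[OF p2, of 0 1 q] p2 by simp
    show ?thesis unfolding f c1 c2 by (rule less.IH[OF qM q1])
  qed
qed


lemma least_fnz:
  fixes p n :: nat
  assumes p2: "p \<ge> 2"
  shows "\<forall>k. n div p^k = m \<longrightarrow> m \<ge> 1 \<longrightarrow> digit p n (LEAST t. k \<le> t \<and> digit p n t \<noteq> 0) = fnz p m"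
proof (induction m rule: less_induct)
  case (less m)
  show ?case
  proof (intro allI impI)
    fix k assume k: "n div p^k = m" and m1: "m \<ge> 1"
    have dk: "digit p n k = m mod p" using k by (simp add: digit_def)
    show "digit p n (LEAST t. k \<le> t \<and> digit p n t \<noteq> 0) = fnz p m"
    proof (cases "m mod p = 0")
      case False
      have "(LEAST t. k \<le> t \<and> digit p n t \<noteq> 0) = k"
        by (rule Least_equality) (use False dk in auto)
      then show ?thesis using fnz_rec[OF p2, of m] m1 False dk by simp
    next
      case True
      have "n div p^Suc k = n div p^k div p" by (simp only: power_Suc2 div_mult2_eq)
      then have k1: "n div p^Suc k = m div p" using k by simp
      have "p dvd m" using True by auto
      then have m1': "m div p \<ge> 1" using m1 p2 by (auto elim!: dvdE)
      have mlt: "m div p < m" using m1 p2 by simp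
      have eqP: "(\<lambda>t. k \<le> t \<and> digit p n t \<noteq> 0) = (\<lambda>t. Suc k \<le> t \<and> digit p n t \<noteq> 0)"
      proof (rule ext)
        fix t show "(k \<le> t \<and> digit p n t \<noteq> 0) = (Suc k \<le> t \<and> digit p n t \<noteq> 0)"
          using True dk by (cases "t = k") auto
      qed
      have "digit p n (LEAST t. Suc k \<le> t \<and> digit p n t \<noteq> 0) = fnz p (m div p)"
        using less.IH[OF mlt] k1 m1' by blast
      then show ?thesis unfolding eqP using fnz_rec[OF p2, of m] m1 True by simp
    qed
  qed
qed

lemma tidx_fnz:
  fixes p s n :: nat
  assumes p2: "p \<ge> 2" and n: "n \<ge> p^(s+1)"
  shows "digit p n (tidx p s n) = fnz p (n div p^(s+1))"
proof -
  have "n div p^(s+1) \<ge> 1" using n p2 by (simp add: less_eq_div_iff_mult_less_eq)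
  moreover have "tidx p s n = (LEAST t. Suc s \<le> t \<and> digit p n t \<noteq> 0)"
    unfolding tidx_def by (simp add: Suc_le_eq)
  ultimately show ?thesis using least_fnz[OF p2, of n "n div p^(s+1)"] by simp
qed

definition TT :: "nat \<Rightarrow> nat \<Rightarrow> nat \<Rightarrow> nat \<Rightarrow> int" where
  "TT p u \<delta> e = (\<Sum>j\<le>u. EE (u*p+p-1) (p*j) * (if j \<le> \<delta> then int (p - e) * bb p (\<delta> - j) else - int e * bb p (p + \<delta> - j)))"

lemma S0_T:
  fixes p u \<delta> M :: nat
  assumes p: "prime p" "odd p" and up: "u < p" and dp: "\<delta> < p" and M1: "M \<ge> 1"
  shows "int (p - fnz p M) * Ssum p u (\<delta> + p*M) 0 = cc p M * TT p u \<delta> (fnz p M)"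
proof -
  have p2: "p \<ge> 2" using p prime_ge_2_nat by blast
  define e where "e = fnz p M"
  have cp: "int (p - e) * cc p (M - 1) = - int e * cc p M" using cc_pred[OF p M1] by (simp add: e_def)
  have "int (p - e) * Ssum p u (\<delta> + p*M) 0 = (\<Sum>j\<le>u. EE (u*p+p-1) (p*j) * (int (p - e) * cc p (\<delta> + p*M - j)))"
    unfolding Ssum_def by (simp add: sum_distrib_left mult_ac)
  also have "\<dots> = (\<Sum>j\<le>u. EE (u*p+p-1) (p*j) * (cc p M * (if j \<le> \<delta> then int (p - e) * bb p (\<delta> - j) else - int e * bb p (p + \<delta> - j))))"
  proof (intro sum.cong refl)
    fix j assume j: "j \<in> {..u}"
    have "int (p - e) * cc p (\<delta> + p*M - j) = cc p M * (if j \<le> \<delta> then int (p - e) * bb p (\<delta> - j) else - int e * bb p (p + \<delta> - j))"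
    proof (cases "j \<le> \<delta>")
      case True
      have "\<delta> + p*M - j = (\<delta> - j) + p^1 * M" using True by simp
      moreover have "cc p ((\<delta> - j) + p^1 * M) = bb p (\<delta> - j) * cc p M"
        by (subst cc_mult[OF p2]) (use dp in \<open>simp_all add: cc_digit[OF p2]\<close>)
      ultimately show ?thesis using True by simp
    next
      case False
      have jp: "j < p" using j up by simp
      have "\<delta> + p*M - j = (p + \<delta> - j) + p^1 * (M - 1)" using False M1 jp
        by (cases M) (auto simp: algebra_simps)
      moreover have "cc p ((p + \<delta> - j) + p^1 * (M - 1)) = bb p (p + \<delta> - j) * cc p (M - 1)"
      proof -
        have pj: "p + \<delta> - j < p" using False p2 by arith
        show ?thesis by (subst cc_mult[OF p2]) (use pj in \<open>simp_all add: cc_digit[OF p2 pj]\<close>)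
      qed
      ultimately have "int (p - e) * cc p (\<delta> + p*M - j) = bb p (p + \<delta> - j) * (int (p - e) * cc p (M - 1))"
        by simp
      also have "\<dots> = cc p M * (- int e * bb p (p + \<delta> - j))" unfolding cp by simp
      finally show ?thesis using False by simp
    qed
    then show "EE (u*p+p-1) (p*j) * (int (p - e) * cc p (\<delta> + p*M - j)) = EE (u*p+p-1) (p*j) * (cc p M * (if j \<le> \<delta> then int (p - e) * bb p (\<delta> - j) else - int e * bb p (p + \<delta> - j)))"
      by simp
  qed
  also have "\<dots> = cc p M * TT p u \<delta> e"
    unfolding TT_def by (simp add: sum_distrib_left mult_ac)
  finally show ?thesis by (simp add: e_def)
qed




lemma dvd_diff_iff: "(m::int) dvd a - b \<Longrightarrow> (m dvd a \<longleftrightarrow> m dvd b)"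
proof -
  assume h: "m dvd a - b"
  have e: "a = (a - b) + b" by simp
  show ?thesis by (subst e) (rule dvd_add_right_iff[OF h])
qed

lemma key:
  fixes p u s n :: nat
  assumes p: "prime p" "odd p" and u1: "1 \<le> u" and up: "u \<le> p - 1" and s: "s \<ge> 2"
    and n: "n \<ge> p^(s+1)" and pA: "int p dvd A p ((p - 1) * (u * p ^ s - 1)) n"
  shows "int p^2 dvd A p ((p - 1) * (u * p ^ s - 1)) n \<longleftrightarrow>
         int p^2 dvd TT p u (digit p n s) (digit p n (tidx p s n))"
proof -
  have p2: "p \<ge> 2" using p prime_ge_2_nat by blast
  have s1: "s \<ge> 1" using s by simp
  define AA where "AA = A p ((p - 1) * (u * p ^ s - 1)) n"
  define d where "d = p^(s-1)"
  define N where "N = n div d"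
  define N0 where "N0 = N mod p"
  define N1 where "N1 = N div p"
  define \<delta> where "\<delta> = N1 mod p"
  define M where "M = N1 div p"
  have ps: "p^s = p^(s-1) * p" using s1 by (metis Suc_diff_1 less_le_trans power_Suc2 zero_less_one)
  have hN1: "N1 = n div p^s" unfolding N1_def N_def d_def ps by (simp add: div_mult2_eq)
  have hM: "M = n div p^(s+1)" unfolding M_def hN1 by (metis div_mult2_eq power_Suc2 Suc_eq_plus1)
  have hd: "\<delta> = digit p n s" unfolding \<delta>_def hN1 digit_def ..
  have NN: "N = N0 + p*N1" by (simp add: N0_def N1_def)
  have NM: "N1 = \<delta> + p*M" by (simp add: \<delta>_def M_def)
  have M1: "M \<ge> 1" unfolding hM using n p2 by (simp add: less_eq_div_iff_mult_less_eq)
  have pN1: "p \<le> N1" unfolding hN1 using n p2 by (simp add: less_eq_div_iff_mult_less_eq mult.commute)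
  have uN1: "u \<le> N1" using pN1 up by simp
  have N0p: "N0 < p" using p2 by (simp add: N0_def)
  have dp: "\<delta> < p" using p2 by (simp add: \<delta>_def)
  have nb: "p^(s-1) * (u*p) \<le> n"
  proof -
    have "p^(s-1) * (u*p) = u * p^s" unfolding ps by simp
    also have "\<dots> \<le> p * p^s" using up p2 by (intro mult_le_mono1) simp
    also have "\<dots> = p^(s+1)" by simp
    finally have "p^(s-1) * (u*p) \<le> p^(s+1)" .
    then show ?thesis using n by (rule order.trans)
  qed
  have mc: "int p^2 dvd AA - (PL p (Suc n) * (1 - fps_X^(p^(s-1)))^(u*p)) $ n"
    unfolding AA_def by (rule main_cong[OF p u1 s1])
  have "(PL p (Suc n) * (1 - fps_X^(p^(s-1)))^(u*p)) $ n = cc p (n mod d) * ((1 - fps_X)^(u*p) * Pc p) $ N"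
    unfolding N_def d_def by (rule extract1[OF p2 nb])
  also have "((1 - fps_X)^(u*p) * Pc p) $ N = Ssum p u N1 N0"
    unfolding Bc_eq[OF p2] NN by (rule extract2[OF p2 N0p uN1])
  finally have mc2: "int p^2 dvd AA - cc p (n mod d) * Ssum p u N1 N0" using mc by simp
  have nc: "\<not> int p dvd cc p (n mod d)" by (rule cc_coprime[OF p(1)])
  have "int p dvd AA - cc p (n mod d) * Ssum p u N1 N0"
    using mc2 by (rule dvd_trans[rotated]) (simp add: power2_eq_square)
  then have "int p dvd cc p (n mod d) * Ssum p u N1 N0" using pA dvd_diff_iff unfolding AA_def by blast
  then have pS: "int p dvd Ssum p u N1 N0" using cancel_p[OF p(1) nc] by simp
  have SA: "(int p dvd Ssum p u N1 N0 \<longleftrightarrow> int p dvd Ssum p u N1 0) \<and>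
           (int p dvd Ssum p u N1 0 \<longrightarrow> int p^2 dvd Ssum p u N1 N0 - Ssum p u N1 0)"
    by (rule S_all[OF p(1) N0p])
  then have d0: "int p^2 dvd Ssum p u N1 N0 - Ssum p u N1 0" using pS by simp
  define e where "e = fnz p M"
  have er: "1 \<le> e \<and> e < p" unfolding e_def by (rule fnz_range[OF p2 M1])
  have he: "e = digit p n (tidx p s n)" unfolding e_def hM using tidx_fnz[OF p2 n] by simp
  have "\<not> p dvd (p - e)" using er by (auto dest: dvd_imp_le)
  then have ne: "\<not> int p dvd int (p - e)" by (metis of_nat_dvd_iff)
  have ncM: "\<not> int p dvd cc p M" by (rule cc_coprime[OF p(1)])
  have T: "int (p - e) * Ssum p u N1 0 = cc p M * TT p u \<delta> e"
    unfolding NM e_def by (rule S0_T[OF p _ dp M1]) (use up p2 in simp)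
  have "int p^2 dvd AA \<longleftrightarrow> int p^2 dvd cc p (n mod d) * Ssum p u N1 N0"
    using mc2 by (rule dvd_diff_iff)
  also have "\<dots> \<longleftrightarrow> int p^2 dvd Ssum p u N1 N0" by (rule cancel_p2[OF p(1) nc])
  also have "\<dots> \<longleftrightarrow> int p^2 dvd Ssum p u N1 0" using d0 by (rule dvd_diff_iff)
  also have "\<dots> \<longleftrightarrow> int p^2 dvd int (p - e) * Ssum p u N1 0" by (rule cancel_p2[OF p(1) ne, symmetric])
  also have "\<dots> \<longleftrightarrow> int p^2 dvd TT p u \<delta> e" unfolding T by (rule cancel_p2[OF p(1) ncM])
  finally show ?thesis unfolding AA_def hd he .
qed

theorem theorem3p1:
  fixes p u s n n' :: nat
  assumes "prime p" and "p \<ge> 3"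
    and "1 \<le> u" and "u \<le> p - 1"
    and "s \<ge> 2"
    and "n \<ge> p ^ (s + 1)" and "n' \<ge> p ^ (s + 1)"
    and "multiplicity (int p) (A p ((p - 1) * (u * p ^ s - 1)) n) \<in> {1, 2}"
    and "multiplicity (int p) (A p ((p - 1) * (u * p ^ s - 1)) n') \<in> {1, 2}"
    and "digit p n s = digit p n' s"
    and "digit p n (tidx p s n) = digit p n' (tidx p s n')"
  shows "multiplicity (int p) (A p ((p - 1) * (u * p ^ s - 1)) n)
       = multiplicity (int p) (A p ((p - 1) * (u * p ^ s - 1)) n')"
proof -
  have p: "prime p" by fact
  have odd: "odd p" using prime_odd_nat[OF p] assms(2) by simp
  have nu: "\<not> is_unit (int p)" using assms(2) by simp
  define k where "k = (p - 1) * (u * p ^ s - 1)"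
  have gen: "multiplicity (int p) (A p k m) = 2 \<longleftrightarrow> int p^2 dvd TT p u (digit p m s) (digit p m (tidx p s m))"
    if m: "m \<ge> p^(s+1)" and v: "multiplicity (int p) (A p k m) \<in> {1, 2}" for m
  proof -
    have nz: "A p k m \<noteq> 0" using v by auto
    have "int p ^ 1 dvd A p k m" using v by (intro multiplicity_dvd') auto
    then have pA: "int p dvd A p k m" by simp
    have "multiplicity (int p) (A p k m) = 2 \<longleftrightarrow> int p^2 dvd A p k m"
    proof
      assume "multiplicity (int p) (A p k m) = 2"
      then show "int p^2 dvd A p k m" by (intro multiplicity_dvd') simp
    next
      assume "int p^2 dvd A p k m"
      then have "multiplicity (int p) (A p k m) \<ge> 2" by (rule multiplicity_geI[OF nz nu])
      then show "multiplicity (int p) (A p k m) = 2" using v by auto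
    qed
    also have "\<dots> \<longleftrightarrow> int p^2 dvd TT p u (digit p m s) (digit p m (tidx p s m))"
      unfolding k_def by (rule key[OF p odd assms(3,4,5) m pA[unfolded k_def]])
    finally show ?thesis .
  qed
  have v1: "multiplicity (int p) (A p k n) \<in> {1, 2}" using assms(8) by (simp add: k_def)
  have v2: "multiplicity (int p) (A p k n') \<in> {1, 2}" using assms(9) by (simp add: k_def)
  have "multiplicity (int p) (A p k n) = 2 \<longleftrightarrow> multiplicity (int p) (A p k n') = 2"
    using gen[OF assms(6) v1] gen[OF assms(7) v2] assms(10,11) by simp
  then have "multiplicity (int p) (A p k n) = multiplicity (int p) (A p k n')" using v1 v2 by auto
  then show ?thesis by (simp add: k_def)
qed


end
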